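(* For every set of formulas $\Gamma$ and formula $\alpha$: if $\Gamma \vDash_{\bf Km} \alpha$ then there exists a finite subset $\Gamma_0\subseteq\Gamma$ such that $\Gamma_0 \vDash_{\bf Km} \alpha$.
   Context: Formulas are built from a denumerable set of propositional variables by the unary connectives $\neg$, $\Box$ and the binary connective $\to$; $For$ is the set of all formulas. Nmatrix semantics: an Nmatrix has a domain $A$, a set $D\subseteq A$ of designated values and, for each connective, a multioperation assigning to each tuple of arguments a nonempty subset of $A$. A valuation is a map $v:For\to A$ with $v(\neg\alpha)\in\tilde\neg(v(\alpha))$, $v(\Box\alpha)\in\tilde\Box(v(\alpha))$, $v(\alpha\to\beta)\in v(\alpha)\tilde\to v(\beta)$. $\Gamma\vDash\alpha$ iff every valuation $v$ with $v(\gamma)\in D$ for all $\gamma\in\Gamma$ has $v(\alpha)\in D$. The Nmatrix for ${\bf Km}$ (consequence $\vDash_{\bf Km}$): domain $\{T^+,C^+,F^+,I^+,T^-,C^-,F^-,I^-\}$, designated set $+=\{T^+,C^+,F^+,I^+\}$, and $-=\{T^-,C^-,F^-,I^-\}$. Negation: $\tilde\neg T^+=\{F^-\}$, $\tilde\neg C^+=\{C^-\}$, $\tilde\neg F^+=\{T^-\}$, $\tilde\neg I^+=\{I^-\}$, $\tilde\neg T^-=\{F^+\}$, $\tilde\neg C^-=\{C^+\}$, $\tilde\neg F^-=\{T^+\}$, $\tilde\neg I^-=\{I^+\}$. Necessity: $\tilde\Box x=+$ if $x\in\{T^+,T^-,I^+,I^-\}$, and $\tilde\Box x=-$ otherwise.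 Implication (row $x$, column $y$ gives $x\tilde\to y$): $$\begin{array}{c|cccccccc} \to & T^+ & C^+ & F^+ & I^+ & T^- & C^- & F^- & I^-\\\hline T^+ & \{T^+\}&\{C^+\}&\{F^+\}&\{I^+\}&\{T^-\}&\{C^-\}&\{F^-\}&\{I^-\}\\ C^+ & \{T^+\}&\{T^+,C^+\}&\{C^+\}&\{I^+\}&\{T^-\}&\{T^-,C^-\}&\{C^-\}&\{I^-\}\\ F^+ & \{T^+\}&\{T^+\}&\{T^+\}&\{I^+\}&\{T^-\}&\{T^-\}&\{T^-\}&\{I^-\}\\ I^+ & \{I^+\}&\{I^+\}&\{I^+\}&\{I^+\}&\{I^-\}&\{I^-\}&\{I^-\}&\{I^-\}\\ T^- & \{T^+\}&\{C^+\}&\{F^+\}&\{I^+\}&\{T^+\}&\{C^+\}&\{F^+\}&\{I^+\}\\ C^- & \{T^+\}&\{T^+,C^+\}&\{C^+\}&\{I^+\}&\{T^+\}&\{T^+,C^+\}&\{C^+\}&\{I^+\}\\ F^- & \{T^+\}&\{T^+\}&\{T^+\}&\{I^+\}&\{T^+\}&\{T^+\}&\{T^+\}&\{I^+\}\\ I^- & \{I^+\}&\{I^+\}&\{I^+\}&\{I^+\}&\{I^+\}&\{I^+\}&\{I^+\}&\{I^+\}\end{array}$$ *)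

theory Defs
  imports Main
begin

datatype form = Var nat | Neg form | Box form | Imp form form

text \<open>Truth values of the Nmatrix for Km: T,C,F,I with polarity + / -.\<close>
datatype base = T | C | F | I
datatype val = Pos base | Ngt base

definition designated :: "val set" where
  "designated = {Pos T, Pos C, Pos F, Pos I}"

definition undesignated :: "val set" where
  "undesignated = {Ngt T, Ngt C, Ngt F, Ngt I}"

fun neg_swap :: "base \<Rightarrow> base" where
  "neg_swap T = F" | "neg_swap C = C" | "neg_swap F = T" | "neg_swap I = I"

fun negKm :: "val \<Rightarrow> val set" where
  "negKm (Pos b) = {Ngt (neg_swap b)}"
| "negKm (Ngt b) = {Pos (neg_swap b)}"

fun base_of :: "val \<Rightarrow> base" where
  "base_of (Pos b) = b" | "base_of (Ngt b) = b"

definition boxKm :: "val \<Rightarrow> val set" where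
  "boxKm x = (if base_of x \<in> {T, I} then designated else undesignated)"

fun imp_base :: "base \<Rightarrow> base \<Rightarrow> base set" where
  "imp_base T y = {y}"
| "imp_base C T = {T}" | "imp_base C C = {T, C}" | "imp_base C F = {C}" | "imp_base C I = {I}"
| "imp_base F I = {I}" | "imp_base F _ = {T}"
| "imp_base I _ = {I}"

fun impKm :: "val \<Rightarrow> val \<Rightarrow> val set" where
  "impKm (Pos a) (Pos b) = Pos ` imp_base a b"
| "impKm (Pos a) (Ngt b) = Ngt ` imp_base a b"
| "impKm (Ngt a) y = Pos ` imp_base a (base_of y)"

definition valuation :: "(form \<Rightarrow> val) \<Rightarrow> bool" where
  "valuation v \<longleftrightarrow>
     (\<forall>\<alpha>. v (Neg \<alpha>) \<in> negKm (v \<alpha>)) \<and>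
     (\<forall>\<alpha>. v (Box \<alpha>) \<in> boxKm (v \<alpha>)) \<and>
     (\<forall>\<alpha> \<beta>. v (Imp \<alpha> \<beta>) \<in> impKm (v \<alpha>) (v \<beta>))"

definition consKm :: "form set \<Rightarrow> form \<Rightarrow> bool" (infix "\<Turnstile>Km" 50) where
  "\<Gamma> \<Turnstile>Km \<alpha> \<longleftrightarrow>
     (\<forall>v. valuation v \<longrightarrow> (\<forall>\<gamma>\<in>\<Gamma>. v \<gamma> \<in> designated) \<longrightarrow> v \<alpha> \<in> designated)"

end

theory Submission
  imports Defs "HOL-Analysis.Analysis"
begin

lemma base_UNIV: "(UNIV :: base set) = {T, C, F, I}"
  using base.exhaust by auto

lemma val_UNIV: "(UNIV :: val set) = Pos ` {T, C, F, I} \<union> Ngt ` {T, C, F, I}"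
proof -
  have "x \<in> Pos ` {T, C, F, I} \<union> Ngt ` {T, C, F, I}" for x :: val
    using base_UNIV by (cases x) auto
  then show ?thesis by blast
qed

lemma finite_val: "finite (UNIV :: val set)"
  by (simp add: val_UNIV)

lemma finite_val2: "finite (UNIV :: (val \<times> val) set)"
  by (metis UNIV_Times_UNIV finite_cartesian_product finite_val)

lemma finite_val3: "finite (UNIV :: (val \<times> val \<times> val) set)"
  by (metis UNIV_Times_UNIV finite_cartesian_product finite_val finite_val2)

definition XT :: "(form \<Rightarrow> val) topology" where
  "XT = product_topology (\<lambda>_. discrete_topology (UNIV :: val set)) UNIV"

lemma topspace_XT: "topspace XT = UNIV"
  by (simp add: XT_def PiE_UNIV_domain)

lemma compact_XT: "compact_space XT"
  unfolding XT_def compact_space_product_topology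
  by (simp add: compact_space_discrete_topology finite_val)

lemma closed_pt: "closedin XT {v. v x = a}"
proof -
  have "closedin XT {v \<in> topspace XT. v x \<in> {a}}"
    by (rule closedin_continuous_map_preimage)
      (auto simp: XT_def intro: continuous_map_product_projection)
  then show ?thesis by (simp add: topspace_XT)
qed

lemma closed_one: "closedin XT {v. P (v x)}"
proof -
  have eq: "{v. P (v x)} = \<Union> ((\<lambda>a. {v. v x = a}) ` {a. P a})" by auto
  show ?thesis unfolding eq
    by (rule closedin_Union) (auto intro: closed_pt finite_subset[OF _ finite_val])
qed

lemma closed_two: "closedin XT {v. P (v x) (v y)}"
proof -
  have eq: "{v. P (v x) (v y)} = \<Union> ((\<lambda>(a,b). {v. v x = a} \<inter> {v. v y = b}) ` {(a,b). P a b})"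
    by auto
  have fin: "finite {(a,b). P a b :: bool}"
    by (rule finite_subset[of _ "UNIV \<times> UNIV"]) (auto simp: finite_val2 finite_val3)
  show ?thesis unfolding eq
    by (rule closedin_Union) (auto intro!: closed_pt fin)
qed

lemma closed_three: "closedin XT {v. P (v x) (v y) (v z)}"
proof -
  have eq: "{v. P (v x) (v y) (v z)} = \<Union> ((\<lambda>(a,b,c). {v. v x = a} \<inter> {v. v y = b} \<inter> {v. v z = c}) ` {(a,b,c). P a b c})"
    by auto
  have fin: "finite {(a,b,c). P a b c :: bool}"
    by (rule finite_subset[of _ "UNIV \<times> UNIV \<times> UNIV"]) (auto simp: finite_val2 finite_val3)
  show ?thesis unfolding eq
    by (rule closedin_Union) (auto intro!: closed_pt fin)
qed

theorem mainTheorem18: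
  fixes \<Gamma> :: "form set" and \<alpha> :: form
  assumes "\<Gamma> \<Turnstile>Km \<alpha>"
  shows "\<exists>\<Gamma>0. \<Gamma>0 \<subseteq> \<Gamma> \<and> finite \<Gamma>0 \<and> \<Gamma>0 \<Turnstile>Km \<alpha>"
proof (rule ccontr)
  assume H: "\<not> ?thesis"
  define D where "D (g::form) = {v. v g \<in> designated}" for g
  define VS where "VS = range (\<lambda>a. {v. v (Neg a) \<in> negKm (v a)})
     \<union> range (\<lambda>a. {v. v (Box a) \<in> boxKm (v a)})
     \<union> range (\<lambda>(a,b). {v. v (Imp a b) \<in> impKm (v a) (v b)})"
  define U where "U = VS \<union> D ` \<Gamma> \<union> {{v. v \<alpha> \<notin> designated}}"
  have cl: "\<forall>A\<in>U. closedin XT A"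
    unfolding U_def VS_def D_def
    by (auto intro: closed_one closed_two closed_three)
  have fip: "\<Inter>F \<noteq> {}" if "finite F" "F \<subseteq> U" for F
  proof -
    define G0 where "G0 = (\<lambda>A. SOME g. g \<in> \<Gamma> \<and> A = D g) ` (F \<inter> D ` \<Gamma>)"
    have G0sub: "G0 \<subseteq> \<Gamma>"
      unfolding G0_def by (auto, metis (mono_tags, lifting) someI_ex)
    have "finite G0" unfolding G0_def using that by auto
    with G0sub H have "\<not> G0 \<Turnstile>Km \<alpha>" by blast
    then obtain v where v: "valuation v" "\<forall>g\<in>G0. v g \<in> designated" "v \<alpha> \<notin> designated"
      unfolding consKm_def by blast
    have "v \<in> A" if A: "A \<in> F" for A
    proof -
      have "A \<in> U" using A \<open>F \<subseteq> U\<close> by blast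
      then consider "A \<in> VS" | "A \<in> D ` \<Gamma>" | "A = {v. v \<alpha> \<notin> designated}"
        unfolding U_def by blast
      then show ?thesis
      proof cases
        case 1
        then show ?thesis using v(1) unfolding VS_def valuation_def by auto
      next
        case 2
        define g where "g = (SOME g. g \<in> \<Gamma> \<and> A = D g)"
        have "\<exists>g. g \<in> \<Gamma> \<and> A = D g" using 2 by blast
        then have "g \<in> \<Gamma> \<and> A = D g" unfolding g_def by (rule someI_ex)
        moreover have "g \<in> G0" unfolding G0_def g_def using A 2 by blast
        ultimately show ?thesis using v(2) D_def by auto
      next
        case 3
        then show ?thesis using v(3) by auto
      qed
    qed
    then show ?thesis by blast
  qed
  have "\<Inter>U \<noteq> {}"
    using compact_XT[unfolded compact_space_fip] cl fip by blast
  then obtain v where v: "v \<in> \<Inter>U" by blast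
  have "valuation v"
    unfolding valuation_def
  proof (intro conjI allI)
    fix a b
    have "{v. v (Neg a) \<in> negKm (v a)} \<in> U" unfolding U_def VS_def by blast
    then show "v (Neg a) \<in> negKm (v a)" using v by blast
    have "{v. v (Box a) \<in> boxKm (v a)} \<in> U" unfolding U_def VS_def by blast
    then show "v (Box a) \<in> boxKm (v a)" using v by blast
    have "{v. v (Imp a b) \<in> impKm (v a) (v b)} \<in> U" unfolding U_def VS_def
      by (rule UnI1, rule UnI1, rule UnI2, rule image_eqI[of _ _ "(a,b)"]) auto
    then show "v (Imp a b) \<in> impKm (v a) (v b)" using v by blast
  qed
  moreover have "\<forall>g\<in>\<Gamma>. v g \<in> designated" using v unfolding U_def D_def by auto
  moreover have "v \<alpha> \<notin> designated" using v unfolding U_def by auto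
  ultimately show False using assms unfolding consKm_def by blast
qed

end
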